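(* Let $m\ge1$, $n\ge0$, $0\le i\le m$. Then the inclusion $\Lambda^{m,n}_i=(\Lambda^m_i\times\Delta^n)\cup(\Delta^m\times\partial\Delta^n)\hookrightarrow\Delta^m\times\Delta^n$ is an $m$-expansion. Likewise, for $m\ge0$, $n\ge1$, $0\le j\le n$, the inclusion $\tilde\Lambda^{m,n}_j=(\partial\Delta^m\times\Delta^n)\cup(\Delta^m\times\Lambda^n_j)\hookrightarrow\Delta^m\times\Delta^n$ is an $n$-expansion.
   Context: $\Lambda^p_i=\bigcup_{j\ne i}\partial_j\Delta^p$ is the horn and $\partial\Delta^p$ the boundary. For $m>0$, an inclusion of simplicial sets $S\hookrightarrow T$ is an $m$-expansion if there is a filtration $S=F_{-1}T\subset F_0T\subset F_1T\subset\cdots$ with $T=\bigcup_\ell F_\ell T$, a weakly monotone sequence $n_\ell\ge m$ ($\ell\ge0$), indices $0\le i_\ell\le n_\ell$, and maps $x_\ell:\Delta^{n_\ell}\to F_\ell T$, $y_\ell:\Lambda^{n_\ell}_{i_\ell}\to F_{\ell-1}T$ making $F_\ell T$ the pushout of $F_{\ell-1}T\leftarrow\Lambda^{n_\ell}_{i_\ell}\hookrightarrow\Delta^{n_\ell}$. *)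

theory Defs
  imports Main "HOL-Library.Extended_Nat"
begin

(* A simplicial set is given by graded carriers X k (the k-simplices) and an
   action: act k \<theta> x is the pullback of x \<in> X l along \<theta> : [k] \<rightarrow> [l]
   (a monotone map {0..k} \<rightarrow> {0..l}). *)

definition mono_op :: "nat \<Rightarrow> nat \<Rightarrow> (nat \<Rightarrow> nat) \<Rightarrow> bool" where
  "mono_op k l \<theta> \<longleftrightarrow> (\<forall>j\<le>k. \<theta> j \<le> l) \<and> (\<forall>j j'. j \<le> j' \<longrightarrow> j' \<le> k \<longrightarrow> \<theta> j \<le> \<theta> j')"

definition is_sset :: "(nat \<Rightarrow> 'a set) \<Rightarrow> (nat \<Rightarrow> (nat \<Rightarrow> nat) \<Rightarrow> 'a \<Rightarrow> 'a) \<Rightarrow> bool" where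
  "is_sset X act \<longleftrightarrow>
     (\<forall>k l. k \<noteq> l \<longrightarrow> X k \<inter> X l = {}) \<and>
     (\<forall>k l \<theta> x. mono_op k l \<theta> \<and> x \<in> X l \<longrightarrow> act k \<theta> x \<in> X k) \<and>
     (\<forall>k x. x \<in> X k \<longrightarrow> act k id x = x) \<and>
     (\<forall>k l p \<theta> \<phi> x. mono_op k l \<theta> \<and> mono_op l p \<phi> \<and> x \<in> X p \<longrightarrow>
         act k \<theta> (act l \<phi> x) = act k (\<phi> \<circ> \<theta>) x) \<and>
     (\<forall>k l \<theta> \<theta>' x. mono_op k l \<theta> \<and> x \<in> X l \<and> (\<forall>j\<le>k. \<theta> j = \<theta>' j) \<longrightarrow>
         act k \<theta> x = act k \<theta>' x)"

definition subcx :: "(nat \<Rightarrow> 'a set) \<Rightarrow> (nat \<Rightarrow> 'a set) \<Rightarrow> (nat \<Rightarrow> (nat \<Rightarrow> nat) \<Rightarrow> 'a \<Rightarrow> 'a) \<Rightarrow> bool" where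
  "subcx S X act \<longleftrightarrow> (\<forall>k. S k \<subseteq> X k) \<and>
     (\<forall>k l \<theta> x. mono_op k l \<theta> \<and> x \<in> S l \<longrightarrow> act k \<theta> x \<in> S k)"

definition smap :: "(nat \<Rightarrow> 'a set) \<Rightarrow> (nat \<Rightarrow> (nat \<Rightarrow> nat) \<Rightarrow> 'a \<Rightarrow> 'a) \<Rightarrow>
    (nat \<Rightarrow> 'b set) \<Rightarrow> (nat \<Rightarrow> (nat \<Rightarrow> nat) \<Rightarrow> 'b \<Rightarrow> 'b) \<Rightarrow> ('a \<Rightarrow> 'b) \<Rightarrow> bool" where
  "smap X actX Y actY f \<longleftrightarrow> (\<forall>k. \<forall>x\<in>X k. f x \<in> Y k) \<and>
     (\<forall>k l \<theta> x. mono_op k l \<theta> \<and> x \<in> X l \<longrightarrow> f (actX k \<theta> x) = actY k \<theta> (f x))"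

(* Pushout of sets: the square  C -g-> A,  C -h-> B,  A -f-> P,  B -k-> P  is a pushout iff it
   commutes and the canonical map from the standard pushout (A \<uplus> B)/~ to P is a bijection,
   where ~ is the equivalence relation generated by Inl (g c) ~ Inr (h c). *)
definition set_pushout :: "'c set \<Rightarrow> 'a set \<Rightarrow> 'b set \<Rightarrow> ('c \<Rightarrow> 'a) \<Rightarrow> ('c \<Rightarrow> 'b) \<Rightarrow>
    'p set \<Rightarrow> ('a \<Rightarrow> 'p) \<Rightarrow> ('b \<Rightarrow> 'p) \<Rightarrow> bool" where
  "set_pushout C A B g h P f k \<longleftrightarrow>
     g ` C \<subseteq> A \<and> h ` C \<subseteq> B \<and>
     (\<forall>c\<in>C. f (g c) = k (h c)) \<and>
     f ` A \<union> k ` B = P \<and>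
     (let D = Inl ` A \<union> Inr ` B;
          E = {(Inl (g c), Inr (h c)) | c. c \<in> C}
      in \<forall>u\<in>D. \<forall>v\<in>D. (case_sum f k u = case_sum f k v) \<longleftrightarrow> (u, v) \<in> (E \<union> E\<inverse>)\<^sup>*)"

(* The standard simplex \<Delta>^p: k-simplices are monotone maps [k] \<rightarrow> [p], written as sorted lists *)
definition simplex :: "nat \<Rightarrow> nat \<Rightarrow> nat list set" where
  "simplex p k = {xs. length xs = Suc k \<and> sorted xs \<and> set xs \<subseteq> {0..p}}"

definition act_list :: "nat \<Rightarrow> (nat \<Rightarrow> nat) \<Rightarrow> nat list \<Rightarrow> nat list" where
  "act_list k \<theta> xs = map (\<lambda>j. xs ! \<theta> j) [0..<Suc k]"

(* horn \<Lambda>^p_i = union of the faces d_j \<Delta>^p, j \<noteq> i *)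
definition horn :: "nat \<Rightarrow> nat \<Rightarrow> nat \<Rightarrow> nat list set" where
  "horn p i k = {xs \<in> simplex p k. \<exists>j\<le>p. j \<noteq> i \<and> j \<notin> set xs}"

(* boundary \<partial>\<Delta>^p = union of all faces *)
definition bdry :: "nat \<Rightarrow> nat \<Rightarrow> nat list set" where
  "bdry p k = {xs \<in> simplex p k. \<exists>j\<le>p. j \<notin> set xs}"

definition act_prod :: "nat \<Rightarrow> (nat \<Rightarrow> nat) \<Rightarrow> nat list \<times> nat list \<Rightarrow> nat list \<times> nat list" where
  "act_prod k \<theta> xy = (act_list k \<theta> (fst xy), act_list k \<theta> (snd xy))"

definition prism :: "nat \<Rightarrow> nat \<Rightarrow> nat \<Rightarrow> (nat list \<times> nat list) set" where
  "prism m n k = simplex m k \<times> simplex n k"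

definition horn_prism1 :: "nat \<Rightarrow> nat \<Rightarrow> nat \<Rightarrow> nat \<Rightarrow> (nat list \<times> nat list) set" where
  "horn_prism1 m n i k = (horn m i k \<times> simplex n k) \<union> (simplex m k \<times> bdry n k)"

definition horn_prism2 :: "nat \<Rightarrow> nat \<Rightarrow> nat \<Rightarrow> nat \<Rightarrow> (nat list \<times> nat list) set" where
  "horn_prism2 m n j k = (bdry m k \<times> simplex n k) \<union> (simplex m k \<times> horn n j k)"

(* Pushout square in sSet: simplicial maps, levelwise a pushout of sets.
   Square: F_{l-1} <-y- \<Lambda>^p_i -incl-> \<Delta>^p,  F_{l-1} -incl-> F_l <-x- \<Delta>^p *)

(* The filtration F 0 = S (= F_{-1}), F (Suc l) = F_l,
   has length N (finite or infinite); step l (enat l < N) attaches a horn \<Lambda>^{n l}_{i l} \<subseteq> \<Delta>^{n l}. *)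
definition expansion :: "nat \<Rightarrow> (nat \<Rightarrow> 'a set) \<Rightarrow> (nat \<Rightarrow> 'a set) \<Rightarrow>
    (nat \<Rightarrow> (nat \<Rightarrow> nat) \<Rightarrow> 'a \<Rightarrow> 'a) \<Rightarrow> bool" where
  "expansion m S T act \<longleftrightarrow> is_sset T act \<and> subcx S T act \<and>
    (\<exists>(N::enat) (F :: nat \<Rightarrow> nat \<Rightarrow> 'a set) (nn :: nat \<Rightarrow> nat) (ii :: nat \<Rightarrow> nat)
        (x :: nat \<Rightarrow> nat list \<Rightarrow> 'a) (y :: nat \<Rightarrow> nat list \<Rightarrow> 'a).
       F 0 = S \<and>
       (\<forall>l. enat l \<le> N \<longrightarrow> subcx (F l) T act) \<and>
       (\<forall>k. T k = (\<Union>l\<in>{l. enat l \<le> N}. F l k)) \<and>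
       (\<forall>l. enat (Suc l) < N \<longrightarrow> nn l \<le> nn (Suc l)) \<and>
       (\<forall>l. enat l < N \<longrightarrow>
          m \<le> nn l \<and> ii l \<le> nn l \<and>
          (\<forall>k. F l k \<subseteq> F (Suc l) k) \<and>
          smap (simplex (nn l)) act_list (F (Suc l)) act (x l) \<and>
          smap (horn (nn l) (ii l)) act_list (F l) act (y l) \<and>
          (\<forall>k. set_pushout (horn (nn l) (ii l) k) (F l k) (simplex (nn l) k) (y l) id
                 (F (Suc l) k) id (x l))))"

end

theory Submission
  imports Defs "HOL-Library.Product_Lexorder"
begin


lemma pushout_gen:
  fixes A :: "'a set" and B :: "'c set" and k :: "'c \<Rightarrow> 'a" and g :: "'c \<Rightarrow> 'a"
  assumes "C \<subseteq> B" "inj_on k B" "k ` C \<subseteq> A" "k ` (B - C) \<inter> A = {}" "\<forall>c\<in>C. g c = k c"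
  shows "set_pushout C A B g id (A \<union> k ` B) id k"
proof -
  define E :: "('a + 'c) rel" where "E = {(Inl (g c), Inr (id c)) | c. c \<in> C}"
  have val: "case_sum id k u = case_sum id k v" if "(u,v) \<in> (E \<union> E\<inverse>)\<^sup>*" for u v
    using that
  proof (induction rule: rtrancl_induct)
    case base then show ?case by simp
  next
    case (step v w) then show ?case using assms(5) by (auto simp: E_def)
  qed
  have rel: "(u,v) \<in> (E \<union> E\<inverse>)\<^sup>*" if uv: "u \<in> Inl ` A \<union> Inr ` B" "v \<in> Inl ` A \<union> Inr ` B"
    "case_sum id k u = case_sum id k v" for u v
  proof -
    consider a a' where "u = Inl a" "v = Inl a'" "a \<in> A" "a' \<in> A"
      | a b where "u = Inl a" "v = Inr b" "a \<in> A" "b \<in> B"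
      | a b where "u = Inr b" "v = Inl a" "a \<in> A" "b \<in> B"
      | b b' where "u = Inr b" "v = Inr b'" "b \<in> B" "b' \<in> B"
      using uv(1,2) by blast
    then show ?thesis
    proof cases
      case 1 then show ?thesis using that(3) by simp
    next
      case 2
      then have "a = k b" using that(3) by simp
      then have "b \<in> C" using assms(4) 2 by blast
      then have "(u,v) \<in> E" using 2 \<open>a = k b\<close> assms(5) unfolding E_def by auto
      then show ?thesis by blast
    next
      case 3
      then have "a = k b" using that(3) by simp
      then have "b \<in> C" using assms(4) 3 by blast
      then have "(v,u) \<in> E" using 3 \<open>a = k b\<close> assms(5) unfolding E_def by auto
      then show ?thesis by blast
    next
      case 4
      then have "b = b'" using that(3) assms(2) by (simp add: inj_on_def)
      then show ?thesis using 4 by simp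
    qed
  qed
  have eq: "\<forall>u\<in>Inl ` A \<union> Inr ` B. \<forall>v\<in>Inl ` A \<union> Inr ` B.
      (case_sum id k u = case_sum id k v) \<longleftrightarrow> (u, v) \<in> (E \<union> E\<inverse>)\<^sup>*"
    using val rel by blast
  show ?thesis
    unfolding set_pushout_def Let_def
    using assms(1,3,5) eq unfolding E_def by force
qed



lemma act_list_len[simp]: "length (act_list k \<theta> xs) = Suc k"
  by (simp add: act_list_def)

lemma act_list_nth[simp]: "j \<le> k \<Longrightarrow> act_list k \<theta> xs ! j = xs ! \<theta> j"
  by (simp add: act_list_def del: upt_Suc)

lemma act_simplex:
  assumes "xs \<in> simplex p l" "mono_op k l \<theta>"
  shows "act_list k \<theta> xs \<in> simplex p k"
proof -
  have len: "length xs = Suc l" and so: "sorted xs" and st: "set xs \<subseteq> {0..p}"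
    using assms(1) by (auto simp: simplex_def)
  have th: "\<And>j. j \<le> k \<Longrightarrow> \<theta> j \<le> l" and mo: "\<And>j j'. j \<le> j' \<Longrightarrow> j' \<le> k \<Longrightarrow> \<theta> j \<le> \<theta> j'"
    using assms(2) by (auto simp: mono_op_def)
  have "sorted (act_list k \<theta> xs)"
    unfolding sorted_iff_nth_mono
    using th mo len so by (auto intro!: sorted_nth_mono simp: less_Suc_eq_le)
  moreover have "set (act_list k \<theta> xs) \<subseteq> {0..p}"
  proof
    fix z assume "z \<in> set (act_list k \<theta> xs)"
    then obtain j where "j < Suc k" "z = act_list k \<theta> xs ! j" by (auto simp: in_set_conv_nth)
    then have "z = xs ! \<theta> j" "\<theta> j < length xs" using th len by (auto simp: less_Suc_eq_le)
    then show "z \<in> {0..p}" using st nth_mem by blast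
  qed
  ultimately show ?thesis by (simp add: simplex_def)
qed

lemma act_list_id: "length xs = Suc k \<Longrightarrow> act_list k id xs = xs"
proof -
  assume "length xs = Suc k"
  then have "[0..<Suc k] = [0..<length xs]" by simp
  then show ?thesis unfolding act_list_def by (simp only: id_apply map_nth)
qed

lemma act_list_comp:
  assumes "mono_op k l \<theta>"
  shows "act_list k \<theta> (act_list l \<phi> xs) = act_list k (\<phi> \<circ> \<theta>) xs"
  using assms unfolding act_list_def mono_op_def
  by (auto simp: less_Suc_eq_le simp del: upt_Suc)

lemma act_list_cong:
  assumes "\<forall>j\<le>k. \<theta> j = \<theta>' j"
  shows "act_list k \<theta> xs = act_list k \<theta>' xs"
  using assms unfolding act_list_def by (auto simp del: upt_Suc)

lemma simplex_len: "xs \<in> simplex p k \<Longrightarrow> length xs = Suc k"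
  by (simp add: simplex_def)

lemma prism_sset: "is_sset (prism m n) act_prod"
  unfolding is_sset_def
proof (intro conjI allI impI)
  fix k l :: nat assume "k \<noteq> l"
  then show "prism m n k \<inter> prism m n l = {}"
  proof -
    have "a \<notin> simplex m l" if "a \<in> simplex m k" for a
      using that \<open>k \<noteq> l\<close> simplex_len by (metis nat.inject)
    then show ?thesis unfolding prism_def by blast
  qed
next
  fix k l \<theta> x assume "mono_op k l \<theta> \<and> x \<in> prism m n l"
  then show "act_prod k \<theta> x \<in> prism m n k"
    by (cases x) (simp add: prism_def act_prod_def; blast intro: act_simplex)
next
  fix k x assume "x \<in> prism m n k"
  then show "act_prod k id x = x"
    by (cases x) (simp add: prism_def act_prod_def; metis act_list_id simplex_len)
next
  fix k l p \<theta> \<phi> x assume "mono_op k l \<theta> \<and> mono_op l p \<phi> \<and> x \<in> prism m n p"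
  then have "mono_op k l \<theta>" by simp
  then show "act_prod k \<theta> (act_prod l \<phi> x) = act_prod k (\<phi> \<circ> \<theta>) x"
    by (simp add: act_prod_def act_list_comp)
next
  fix k l \<theta> \<theta>' x assume "mono_op k l \<theta> \<and> x \<in> prism m n l \<and> (\<forall>j\<le>k. \<theta> j = \<theta>' j)"
  then show "act_prod k \<theta> x = act_prod k \<theta>' x"
  proof -
    have "\<forall>j\<le>k. \<theta> j = \<theta>' j" using \<open>mono_op k l \<theta> \<and> x \<in> prism m n l \<and> (\<forall>j\<le>k. \<theta> j = \<theta>' j)\<close> by simp
    then show ?thesis unfolding act_prod_def using act_list_cong[of k \<theta> \<theta>'] by simp
  qed
qed

definition zs :: "nat list \<times> nat list \<Rightarrow> (nat \<times> nat) set" where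
  "zs ab = set (zip (fst ab) (snd ab))"

definition cx :: "nat \<Rightarrow> nat \<Rightarrow> (nat \<times> nat) set set \<Rightarrow> nat \<Rightarrow> (nat list \<times> nat list) set" where
  "cx m n K k = {ab \<in> prism m n k. zs ab \<in> K}"

definition downcl :: "'x set set \<Rightarrow> bool" where
  "downcl K \<longleftrightarrow> (\<forall>A B. A \<in> K \<longrightarrow> B \<subseteq> A \<longrightarrow> B \<in> K)"

lemma zs_act:
  assumes "ab \<in> prism m n l" "mono_op k l \<theta>"
  shows "zs (act_prod k \<theta> ab) \<subseteq> zs ab"
proof
  obtain a b where ab: "ab = (a,b)" by (cases ab)
  have len: "length a = Suc l" "length b = Suc l" using assms(1) ab by (auto simp: prism_def simplex_len)
  fix z assume "z \<in> zs (act_prod k \<theta> ab)"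
  then obtain j where j: "j < Suc k" "z = zip (act_list k \<theta> a) (act_list k \<theta> b) ! j"
    by (auto simp: zs_def act_prod_def ab in_set_conv_nth)
  then have "z = (a ! \<theta> j, b ! \<theta> j)" by simp
  moreover have "\<theta> j < Suc l" using assms(2) j by (auto simp: mono_op_def less_Suc_eq_le)
  ultimately have "z = zip a b ! \<theta> j" "\<theta> j < length (zip a b)" using len by auto
  then have "z \<in> set (zip a b)" by (metis nth_mem)
  then show "z \<in> zs ab" unfolding zs_def ab by simp
qed

lemma cx_subcx:
  assumes "downcl K"
  shows "subcx (cx m n K) (prism m n) act_prod"
  unfolding subcx_def
proof (intro conjI allI impI)
  fix k show "cx m n K k \<subseteq> prism m n k" by (auto simp: cx_def)
next
  fix k l \<theta> x assume a: "mono_op k l \<theta> \<and> x \<in> cx m n K l"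
  then have "act_prod k \<theta> x \<in> prism m n k"
    by (cases x) (simp add: cx_def prism_def act_prod_def; blast intro: act_simplex)
  moreover have "zs (act_prod k \<theta> x) \<in> K"
  proof -
    have "x \<in> prism m n l" "zs x \<in> K" using a by (auto simp: cx_def)
    then show ?thesis using a zs_act[of x m n l k \<theta>] assms unfolding downcl_def by blast
  qed
  ultimately show "act_prod k \<theta> x \<in> cx m n K k" by (simp add: cx_def)
qed



definition le2 :: "nat \<times> nat \<Rightarrow> nat \<times> nat \<Rightarrow> bool" where
  "le2 u v \<longleftrightarrow> fst u \<le> fst v \<and> snd u \<le> snd v"

definition chain2 :: "nat \<Rightarrow> nat \<Rightarrow> (nat \<times> nat) set \<Rightarrow> bool" where
  "chain2 m n C \<longleftrightarrow> finite C \<and> C \<subseteq> {0..m} \<times> {0..n} \<and> (\<forall>u\<in>C. \<forall>v\<in>C. le2 u v \<or> le2 v u)"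

definition idx :: "'x list \<Rightarrow> 'x \<Rightarrow> nat" where
  "idx vs u = (THE t. t < length vs \<and> vs ! t = u)"

lemma idx_prop:
  assumes "distinct vs" "u \<in> set vs"
  shows "idx vs u < length vs \<and> vs ! idx vs u = u"
proof -
  obtain t where t: "t < length vs" "vs ! t = u" using assms(2) by (auto simp: in_set_conv_nth)
  have "\<exists>!t. t < length vs \<and> vs ! t = u"
  proof (rule ex1I[of _ t])
    show "t < length vs \<and> vs ! t = u" using t by simp
    fix t' assume "t' < length vs \<and> vs ! t' = u"
    then show "t' = t" using t assms(1) nth_eq_iff_index_eq by metis
  qed
  then show ?thesis unfolding idx_def by (rule theI')
qed

lemma idx_nth:
  assumes "distinct vs" "t < length vs"
  shows "idx vs (vs ! t) = t"
proof -
  have "idx vs (vs ! t) < length vs \<and> vs ! idx vs (vs ! t) = vs ! t"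
    using idx_prop[OF assms(1), of "vs ! t"] assms(2) by simp
  then show ?thesis using assms nth_eq_iff_index_eq by blast
qed

lemma le2_lex: "le2 u v \<Longrightarrow> u \<le> v"
  by (cases u; cases v) (auto simp: le2_def less_eq_prod_def)

lemma chain_list:
  assumes "chain2 m n V"
  shows "\<exists>vs. distinct vs \<and> set vs = V \<and> (\<forall>t t'. t \<le> t' \<longrightarrow> t' < length vs \<longrightarrow> le2 (vs!t) (vs!t'))"
proof -
  define vs where "vs = sorted_list_of_set V"
  have fin: "finite V" using assms by (simp add: chain2_def)
  have d: "distinct vs" "set vs = V" "sorted vs" using fin by (auto simp: vs_def)
  have "le2 (vs!t) (vs!t')" if "t \<le> t'" "t' < length vs" for t t'
  proof -
    have "vs!t \<le> vs!t'" using d(3) that by (simp add: sorted_nth_mono)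
    moreover have "vs!t \<in> V" "vs!t' \<in> V" using that d(2) nth_mem by (metis le_less_trans)+
    then have "le2 (vs!t) (vs!t') \<or> le2 (vs!t') (vs!t)" using assms by (auto simp: chain2_def)
    ultimately show ?thesis using le2_lex by (metis order_antisym)
  qed
  then show ?thesis using d by blast
qed

lemma zs_chain:
  assumes "ab \<in> prism m n k"
  shows "chain2 m n (zs ab)"
proof -
  obtain a b where ab: "ab = (a,b)" by (cases ab)
  have a: "length a = Suc k" "sorted a" "set a \<subseteq> {0..m}" and b: "length b = Suc k" "sorted b" "set b \<subseteq> {0..n}"
    using assms ab by (auto simp: prism_def simplex_def)
  have sub: "zs ab \<subseteq> {0..m} \<times> {0..n}"
    unfolding zs_def ab using a b by (auto dest: set_zip_leftD set_zip_rightD)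
  have "le2 u v \<or> le2 v u" if "u \<in> zs ab" "v \<in> zs ab" for u v
  proof -
    have "u \<in> set (zip a b)" "v \<in> set (zip a b)" using that by (simp_all add: zs_def ab)
    then obtain t t' where "t < length (zip a b)" "zip a b ! t = u" "t' < length (zip a b)" "zip a b ! t' = v"
      unfolding in_set_conv_nth by blast
    then have t: "t < Suc k" "u = (a!t, b!t)" and t': "t' < Suc k" "v = (a!t', b!t')" using a b by auto
    show ?thesis
    proof (cases "t \<le> t'")
      case True
      then have "a!t \<le> a!t'" "b!t \<le> b!t'" using t' a b sorted_nth_mono by metis+
      then show ?thesis using t t' by (simp add: le2_def)
    next
      case False
      then have "a!t' \<le> a!t" "b!t' \<le> b!t" using t a b sorted_nth_mono by (metis nat_le_linear)+
      then show ?thesis using t t' by (simp add: le2_def)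
    qed
  qed
  then show ?thesis using sub unfolding chain2_def zs_def ab by auto
qed

definition xmap :: "(nat \<times> nat) list \<Rightarrow> nat list \<Rightarrow> nat list \<times> nat list" where
  "xmap vs c = (map (\<lambda>t. fst (vs!t)) c, map (\<lambda>t. snd (vs!t)) c)"

locale vsl =
  fixes m n p :: nat and vs :: "(nat \<times> nat) list"
  assumes dist: "distinct vs" and len: "length vs = Suc p"
    and grid: "set vs \<subseteq> {0..m} \<times> {0..n}"
    and mon: "\<And>t t'. t \<le> t' \<Longrightarrow> t' < length vs \<Longrightarrow> le2 (vs!t) (vs!t')"
begin

lemma zs_xmap: "zs (xmap vs c) = (\<lambda>t. vs!t) ` set c"
proof -
  have "zip (map (\<lambda>t. fst (vs!t)) c) (map (\<lambda>t. snd (vs!t)) c) = map (\<lambda>t. vs!t) c"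
    by (induction c) auto
  then show ?thesis by (simp add: zs_def xmap_def)
qed

lemma xmap_prism:
  assumes "c \<in> simplex p k"
  shows "xmap vs c \<in> prism m n k"
proof -
  have c: "length c = Suc k" "sorted c" "set c \<subseteq> {0..p}" using assms by (auto simp: simplex_def)
  have inr: "\<And>t. t \<in> set c \<Longrightarrow> vs ! t \<in> {0..m} \<times> {0..n}"
    using c(3) len grid nth_mem by (metis atLeastAtMost_iff le_imp_less_Suc subsetD)
  have "sorted (map (\<lambda>t. fst (vs!t)) c)"
    unfolding sorted_iff_nth_mono
  proof (intro allI impI)
    fix i j assume ij: "i \<le> j" "j < length (map (\<lambda>t. fst (vs ! t)) c)"
    have "c!i \<le> c!j" using c(2) ij by (simp add: sorted_nth_mono)
    moreover have "c!j < length vs" using ij c(3) len nth_mem by (metis atLeastAtMost_iff le_imp_less_Suc length_map subsetD)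
    ultimately have "le2 (vs!(c!i)) (vs!(c!j))" by (rule mon)
    then show "map (\<lambda>t. fst (vs ! t)) c ! i \<le> map (\<lambda>t. fst (vs ! t)) c ! j"
      using ij by (simp add: le2_def)
  qed
  moreover have "sorted (map (\<lambda>t. snd (vs!t)) c)"
    unfolding sorted_iff_nth_mono
  proof (intro allI impI)
    fix i j assume ij: "i \<le> j" "j < length (map (\<lambda>t. snd (vs ! t)) c)"
    have "c!i \<le> c!j" using c(2) ij by (simp add: sorted_nth_mono)
    moreover have "c!j < length vs" using ij c(3) len nth_mem by (metis atLeastAtMost_iff le_imp_less_Suc length_map subsetD)
    ultimately have "le2 (vs!(c!i)) (vs!(c!j))" by (rule mon)
    then show "map (\<lambda>t. snd (vs ! t)) c ! i \<le> map (\<lambda>t. snd (vs ! t)) c ! j"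
      using ij by (simp add: le2_def)
  qed
  moreover have "set (map (\<lambda>t. fst (vs!t)) c) \<subseteq> {0..m}" "set (map (\<lambda>t. snd (vs!t)) c) \<subseteq> {0..n}"
    using inr by (auto dest: inr simp: mem_Times_iff)
  ultimately show ?thesis using c(1) by (simp add: prism_def simplex_def xmap_def)
qed

lemma xmap_act:
  assumes "c \<in> simplex p l" "mono_op k l \<theta>"
  shows "xmap vs (act_list k \<theta> c) = act_prod k \<theta> (xmap vs c)"
proof -
  have "length c = Suc l" using assms(1) by (simp add: simplex_def)
  moreover have "\<And>j. j \<le> k \<Longrightarrow> \<theta> j \<le> l" using assms(2) by (simp add: mono_op_def)
  ultimately show ?thesis
    unfolding xmap_def act_prod_def act_list_def by (auto simp: less_Suc_eq_le simp del: upt_Suc)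
qed

lemma xmap_inj: "inj_on (xmap vs) (simplex p k)"
proof
  fix c c' assume c: "c \<in> simplex p k" and c': "c' \<in> simplex p k" and eq: "xmap vs c = xmap vs c'"
  have lc: "length c = Suc k" "set c \<subseteq> {0..p}" "length c' = Suc k" "set c' \<subseteq> {0..p}"
    using c c' by (auto simp: simplex_def)
  show "c = c'"
  proof (rule nth_equalityI)
    show "length c = length c'" using lc by simp
    fix t assume t: "t < length c"
    have "fst (vs!(c!t)) = fst (vs!(c'!t))" "snd (vs!(c!t)) = snd (vs!(c'!t))"
      using eq t lc unfolding xmap_def by (metis nth_map prod.inject)+
    then have "vs!(c!t) = vs!(c'!t)" by (simp add: prod_eq_iff)
    moreover have "c!t < length vs" "c'!t < length vs"
      using t lc len nth_mem by (metis atLeastAtMost_iff le_imp_less_Suc subsetD)+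
    ultimately show "c!t = c'!t" using dist nth_eq_iff_index_eq by blast
  qed
qed

lemma xmap_surj:
  assumes "ab \<in> prism m n k" "zs ab \<subseteq> set vs"
  shows "\<exists>c\<in>simplex p k. xmap vs c = ab"
proof -
  obtain a b where ab: "ab = (a,b)" by (cases ab)
  have a: "length a = Suc k" and b: "length b = Suc k"
    using assms ab by (auto simp: prism_def simplex_def)
  have sa: "sorted a" "sorted b" using assms ab by (auto simp: prism_def simplex_def)
  define z where "z = zip a b"
  have lz: "length z = Suc k" using a b by (simp add: z_def)
  have zin: "z!t \<in> set vs" if "t < Suc k" for t
  proof -
    have "set z \<subseteq> set vs" using assms(2) by (simp add: zs_def ab z_def)
    moreover have "z!t \<in> set z" using that lz by simp
    ultimately show ?thesis by blast
  qed
  define c where "c = map (idx vs) z"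
  have ip: "idx vs (z!t) < length vs \<and> vs ! idx vs (z!t) = z!t" if "t < Suc k" for t
    using idx_prop[OF dist zin[OF that]] .
  have ch: "chain2 m n (zs ab)" using zs_chain[OF assms(1)] .
  have "sorted c"
    unfolding sorted_iff_nth_mono
  proof (intro allI impI)
    fix i j assume ij: "i \<le> j" "j < length c"
    then have ij': "i < Suc k" "j < Suc k" using lz by (auto simp: c_def)
    show "c!i \<le> c!j"
    proof (rule ccontr)
      assume "\<not> c!i \<le> c!j"
      then have lt: "idx vs (z!j) < idx vs (z!i)" using ij' lz by (simp add: c_def)
      then have "le2 (vs ! idx vs (z!j)) (vs ! idx vs (z!i))" using mon[of "idx vs (z!j)" "idx vs (z!i)"] ip[OF ij'(1)] by simp
      then have l1: "le2 (z!j) (z!i)" using ip ij' by simp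
      have "a!i \<le> a!j" "b!i \<le> b!j" using ij ij' a b sa sorted_nth_mono by metis+
      then have "le2 (z!i) (z!j)" using ij' a b by (simp add: z_def le2_def)
      then have "z!i = z!j" using l1 by (auto simp: le2_def prod_eq_iff)
      then show False using lt by simp
    qed
  qed
  moreover have "set c \<subseteq> {0..p}"
  proof
    fix x assume "x \<in> set c"
    then obtain t where "t < Suc k" "x = idx vs (z!t)" using lz by (auto simp: c_def in_set_conv_nth)
    then show "x \<in> {0..p}" using ip[of t] len by (simp add: less_Suc_eq_le)
  qed
  moreover have "length c = Suc k" using lz by (simp add: c_def)
  ultimately have cs: "c \<in> simplex p k" by (simp add: simplex_def)
  have "map (\<lambda>t. vs ! t) c = z"
    by (rule nth_equalityI) (use lz ip in \<open>auto simp: c_def\<close>)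
  then have "map fst (map (\<lambda>t. vs ! t) c) = a" "map snd (map (\<lambda>t. vs ! t) c) = b"
    using a b by (auto simp: z_def)
  then have "xmap vs c = ab" unfolding xmap_def ab by (simp add: comp_def)
  then show ?thesis using cs by blast
qed

lemma horn_zs:
  assumes "c \<in> horn p i k"
  shows "\<exists>j\<le>p. j \<noteq> i \<and> zs (xmap vs c) \<subseteq> set vs - {vs ! j}"
proof -
  have "c \<in> simplex p k \<and> (\<exists>j\<le>p. j \<noteq> i \<and> j \<notin> set c)" using assms by (simp add: horn_def)
  then obtain j where j: "j \<le> p" "j \<noteq> i" "j \<notin> set c" and cs: "c \<in> simplex p k" by blast
  have "set c \<subseteq> {0..p}" using cs by (simp add: simplex_def)
  have "vs!t \<in> set vs - {vs ! j}" if "t \<in> set c" for t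
  proof -
    have "t < length vs" "j < length vs" "t \<noteq> j" using that \<open>set c \<subseteq> {0..p}\<close> j len by auto
    then have "vs!t \<noteq> vs!j" by (simp add: nth_eq_iff_index_eq dist)
    then show ?thesis using \<open>t < length vs\<close> by simp
  qed
  then have "(\<lambda>t. vs!t) ` set c \<subseteq> set vs - {vs ! j}" by (simp add: image_subset_iff)
  then have "zs (xmap vs c) \<subseteq> set vs - {vs ! j}" by (simp only: zs_xmap)
  then show ?thesis using j(1,2) by blast
qed

lemma nonhorn_zs:
  assumes "c \<in> simplex p k" "c \<notin> horn p i k"
  shows "set vs - {vs ! i} \<subseteq> zs (xmap vs c)"
proof
  fix u assume u: "u \<in> set vs - {vs ! i}"
  then obtain t where t: "t < Suc p" "vs ! t = u" using len by (auto simp: in_set_conv_nth)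
  then have "t \<noteq> i" using u by auto
  moreover have "\<not> (\<exists>j\<le>p. j \<noteq> i \<and> j \<notin> set c)" using assms by (simp add: horn_def)
  ultimately have "t \<in> set c" using t(1) by (meson less_Suc_eq_le)
  then have "vs ! t \<in> (\<lambda>t. vs!t) ` set c" by (rule imageI)
  then show "u \<in> zs (xmap vs c)" using t(2) by (simp add: zs_xmap)
qed

end



definition Kl :: "(nat \<times> nat) set set \<Rightarrow> (nat \<times> nat) set list \<Rightarrow> nat \<Rightarrow> (nat \<times> nat) set set" where
  "Kl K0 ts l = K0 \<union> {U. \<exists>j<l. U \<subseteq> ts!j}"

lemma Kl_0: "Kl K0 ts 0 = K0" by (simp add: Kl_def)

lemma Kl_Suc: "Kl K0 ts (Suc l) = Kl K0 ts l \<union> {U. U \<subseteq> ts!l}"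
  by (auto simp: Kl_def less_Suc_eq)

lemma Kl_mono: "l \<le> l' \<Longrightarrow> Kl K0 ts l \<subseteq> Kl K0 ts l'"
  by (auto simp: Kl_def) (meson order_less_le_trans)

lemma Kl_down: "downcl K0 \<Longrightarrow> downcl (Kl K0 ts l)"
  unfolding downcl_def Kl_def by blast

lemma cx_mono: "K \<subseteq> K' \<Longrightarrow> cx m n K k \<subseteq> cx m n K' k"
  by (auto simp: cx_def)

lemma levelA:
  assumes dc: "downcl K0"
  and ch: "\<And>l. l < length ts \<Longrightarrow> chain2 m n (ts!l)"
  and wsin: "\<And>l. l < length ts \<Longrightarrow> ws!l \<in> ts!l"
  and c1: "\<And>l v. l < length ts \<Longrightarrow> v \<in> ts!l \<Longrightarrow> v \<noteq> ws!l \<Longrightarrow> ts!l - {v} \<in> Kl K0 ts l"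
  and c2: "\<And>l. l < length ts \<Longrightarrow> ts!l - {ws!l} \<notin> Kl K0 ts l"
  and dim: "\<And>l. l < length ts \<Longrightarrow> Suc d \<le> card (ts!l)"
  and mono: "\<And>l. Suc l < length ts \<Longrightarrow> card (ts!l) \<le> card (ts!Suc l)"
  and cov: "\<And>C. chain2 m n C \<Longrightarrow> C \<in> Kl K0 ts (length ts)"
  shows "expansion d (cx m n K0) (prism m n) act_prod"
proof -
  define P where "P l vs \<longleftrightarrow> distinct vs \<and> set vs = ts!l \<and>
      (\<forall>t t'. t \<le> t' \<longrightarrow> t' < length vs \<longrightarrow> le2 (vs!t) (vs!t'))" for l vs
  have "\<forall>l. \<exists>vs. l < length ts \<longrightarrow> P l vs"
    using chain_list ch unfolding P_def by metis
  then obtain vsf where vsf: "\<And>l. l < length ts \<Longrightarrow> P l (vsf l)"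
    using choice by metis
  define nn where "nn l = card (ts!l) - 1" for l
  define ii where "ii l = idx (vsf l) (ws!l)" for l
  define F where "F l = cx m n (Kl K0 ts l)" for l
  define x where "x l = xmap (vsf l)" for l
  have vsl: "vsl m n (nn l) (vsf l)" if l: "l < length ts" for l
  proof
    show "distinct (vsf l)" using vsf[OF l] by (simp add: P_def)
    have "length (vsf l) = card (ts!l)" using vsf[OF l] distinct_card unfolding P_def by metis
    then show "length (vsf l) = Suc (nn l)" using dim[OF l] by (simp add: nn_def)
    show "set (vsf l) \<subseteq> {0..m} \<times> {0..n}" using vsf[OF l] ch[OF l] by (simp add: P_def chain2_def)
    show "\<And>t t'. t \<le> t' \<Longrightarrow> t' < length (vsf l) \<Longrightarrow> le2 (vsf l ! t) (vsf l ! t')"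
      using vsf[OF l] by (simp add: P_def)
  qed
  have setv: "set (vsf l) = ts!l" if "l < length ts" for l using vsf[OF that] by (simp add: P_def)
  have Fsub: "F l k \<subseteq> prism m n k" for l k by (auto simp: F_def cx_def)
  have Fdown: "downcl (Kl K0 ts l)" for l using Kl_down[OF dc] .
  have step: "d \<le> nn l \<and> ii l \<le> nn l \<and>
          (\<forall>k. F l k \<subseteq> F (Suc l) k) \<and>
          smap (simplex (nn l)) act_list (F (Suc l)) act_prod (x l) \<and>
          smap (horn (nn l) (ii l)) act_list (F l) act_prod (x l) \<and>
          (\<forall>k. set_pushout (horn (nn l) (ii l) k) (F l k) (simplex (nn l) k) (x l) id
                 (F (Suc l) k) id (x l))" if l: "l < length ts" for l
  proof -
    interpret V: vsl m n "nn l" "vsf l" using vsl[OF l] .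
    have d1: "d \<le> nn l" using dim[OF l] by (simp add: nn_def)
    have ip: "ii l < length (vsf l) \<and> vsf l ! ii l = ws!l"
      unfolding ii_def by (rule idx_prop) (use V.dist setv[OF l] wsin[OF l] in auto)
    then have d2: "ii l \<le> nn l" using V.len by simp
    have d3: "F l k \<subseteq> F (Suc l) k" for k unfolding F_def by (rule cx_mono, rule Kl_mono) simp
    have xin: "x l c \<in> F (Suc l) k" if "c \<in> simplex (nn l) k" for c k
    proof -
      have "\<forall>t\<in>set c. t < length (vsf l)" using that V.len by (auto simp: simplex_def)
      then have "zs (x l c) \<subseteq> set (vsf l)" unfolding x_def V.zs_xmap by auto
      then have "zs (x l c) \<subseteq> ts!l" using setv[OF l] by simp
      then show ?thesis using V.xmap_prism[OF that] unfolding F_def cx_def x_def by (simp add: Kl_Suc)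
    qed
    have d4: "smap (simplex (nn l)) act_list (F (Suc l)) act_prod (x l)"
      unfolding smap_def using xin V.xmap_act unfolding x_def by blast
    have hin: "x l c \<in> F l k" if hc: "c \<in> horn (nn l) (ii l) k" for c k
    proof -
      obtain j where j: "j \<le> nn l" "j \<noteq> ii l" "zs (x l c) \<subseteq> set (vsf l) - {vsf l ! j}"
        using V.horn_zs[OF hc] unfolding x_def by blast
      have jl: "j < length (vsf l)" using j V.len by simp
      have "vsf l ! j \<noteq> ws ! l" using ip jl j(2) V.dist nth_eq_iff_index_eq by metis
      moreover have "vsf l ! j \<in> ts!l" using jl setv[OF l] nth_mem by metis
      ultimately have "ts!l - {vsf l ! j} \<in> Kl K0 ts l" using c1[OF l] by blast
      then have "zs (x l c) \<in> Kl K0 ts l" using j(3) setv[OF l] Fdown[of l] unfolding downcl_def by blast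
      moreover have "c \<in> simplex (nn l) k" using hc by (simp add: horn_def)
      ultimately show ?thesis using V.xmap_prism unfolding F_def cx_def x_def by simp
    qed
    have d5: "smap (horn (nn l) (ii l)) act_list (F l) act_prod (x l)"
      unfolding smap_def
    proof (intro conjI allI impI ballI)
      fix k c assume "c \<in> horn (nn l) (ii l) k" then show "x l c \<in> F l k" by (rule hin)
    next
      fix k l' \<theta> c assume "mono_op k l' \<theta> \<and> c \<in> horn (nn l) (ii l) l'"
      then show "x l (act_list k \<theta> c) = act_prod k \<theta> (x l c)"
        using V.xmap_act unfolding x_def horn_def by blast
    qed
    have d6: "set_pushout (horn (nn l) (ii l) k) (F l k) (simplex (nn l) k) (x l) id
                 (F (Suc l) k) id (x l)" for k
    proof -
      have "F (Suc l) k = F l k \<union> x l ` simplex (nn l) k"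
      proof
        show "F l k \<union> x l ` simplex (nn l) k \<subseteq> F (Suc l) k" using d3 xin by blast
        show "F (Suc l) k \<subseteq> F l k \<union> x l ` simplex (nn l) k"
        proof
          fix ab assume ab: "ab \<in> F (Suc l) k"
          then have abp: "ab \<in> prism m n k" and "zs ab \<in> Kl K0 ts l \<or> zs ab \<subseteq> ts!l"
            by (auto simp: F_def cx_def Kl_Suc)
          from this(2) show "ab \<in> F l k \<union> x l ` simplex (nn l) k"
          proof
            assume "zs ab \<in> Kl K0 ts l" then show ?thesis using abp by (simp add: F_def cx_def)
          next
            assume "zs ab \<subseteq> ts!l"
            then obtain c where "c \<in> simplex (nn l) k" "xmap (vsf l) c = ab"
              using V.xmap_surj[OF abp] setv[OF l] by metis
            then show ?thesis unfolding x_def by blast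
          qed
        qed
      qed
      moreover have "set_pushout (horn (nn l) (ii l) k) (F l k) (simplex (nn l) k) (x l) id
                 (F l k \<union> x l ` simplex (nn l) k) id (x l)"
      proof (rule pushout_gen)
        show "horn (nn l) (ii l) k \<subseteq> simplex (nn l) k" by (auto simp: horn_def)
        show "inj_on (x l) (simplex (nn l) k)" unfolding x_def by (rule V.xmap_inj)
        show "x l ` horn (nn l) (ii l) k \<subseteq> F l k" using hin by (simp add: image_subset_iff)
        show "\<forall>c\<in>horn (nn l) (ii l) k. x l c = x l c" by simp
        show "x l ` (simplex (nn l) k - horn (nn l) (ii l) k) \<inter> F l k = {}"
        proof (rule ccontr)
          assume "x l ` (simplex (nn l) k - horn (nn l) (ii l) k) \<inter> F l k \<noteq> {}"
          then obtain c where c: "c \<in> simplex (nn l) k" "c \<notin> horn (nn l) (ii l) k" "x l c \<in> F l k"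
            by blast
          have "set (vsf l) - {vsf l ! ii l} \<subseteq> zs (x l c)"
            using V.nonhorn_zs[OF c(1,2)] unfolding x_def .
          then have "ts!l - {ws!l} \<subseteq> zs (x l c)" using ip setv[OF l] by simp
          moreover have "zs (x l c) \<in> Kl K0 ts l" using c(3) by (simp add: F_def cx_def)
          ultimately have "ts!l - {ws!l} \<in> Kl K0 ts l" using Fdown[of l] unfolding downcl_def by blast
          then show False using c2[OF l] by simp
        qed
      qed
      ultimately show ?thesis by simp
    qed
    show ?thesis using d1 d2 d3 d4 d5 d6 by blast
  qed
  have cover: "prism m n k = (\<Union>l\<in>{l. enat l \<le> enat (length ts)}. F l k)" for k
  proof
    show "(\<Union>l\<in>{l. enat l \<le> enat (length ts)}. F l k) \<subseteq> prism m n k" using Fsub by blast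
    show "prism m n k \<subseteq> (\<Union>l\<in>{l. enat l \<le> enat (length ts)}. F l k)"
    proof
      fix ab assume ab: "ab \<in> prism m n k"
      then have "zs ab \<in> Kl K0 ts (length ts)" using cov zs_chain by blast
      then have "ab \<in> F (length ts) k" using ab by (simp add: F_def cx_def)
      then show "ab \<in> (\<Union>l\<in>{l. enat l \<le> enat (length ts)}. F l k)" by blast
    qed
  qed
  have ex: "\<exists>(N::enat) (F :: nat \<Rightarrow> nat \<Rightarrow> (nat list \<times> nat list) set) (nn :: nat \<Rightarrow> nat) (ii :: nat \<Rightarrow> nat)
        (x :: nat \<Rightarrow> nat list \<Rightarrow> nat list \<times> nat list) (y :: nat \<Rightarrow> nat list \<Rightarrow> nat list \<times> nat list).
       F 0 = cx m n K0 \<and>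
       (\<forall>l. enat l \<le> N \<longrightarrow> subcx (F l) (prism m n) act_prod) \<and>
       (\<forall>k. prism m n k = (\<Union>l\<in>{l. enat l \<le> N}. F l k)) \<and>
       (\<forall>l. enat (Suc l) < N \<longrightarrow> nn l \<le> nn (Suc l)) \<and>
       (\<forall>l. enat l < N \<longrightarrow>
          d \<le> nn l \<and> ii l \<le> nn l \<and>
          (\<forall>k. F l k \<subseteq> F (Suc l) k) \<and>
          smap (simplex (nn l)) act_list (F (Suc l)) act_prod (x l) \<and>
          smap (horn (nn l) (ii l)) act_list (F l) act_prod (y l) \<and>
          (\<forall>k. set_pushout (horn (nn l) (ii l) k) (F l k) (simplex (nn l) k) (y l) id
                 (F (Suc l) k) id (x l)))"
  proof (rule exI[of _ "enat (length ts)"], rule exI[of _ F], rule exI[of _ nn], rule exI[of _ ii],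
         rule exI[of _ x], rule exI[of _ x], intro conjI allI impI)
    show "F 0 = cx m n K0" by (simp add: F_def Kl_0)
    show "subcx (F l) (prism m n) act_prod" for l unfolding F_def by (rule cx_subcx[OF Fdown])
    show "prism m n k = (\<Union>l\<in>{l. enat l \<le> enat (length ts)}. F l k)" for k by (rule cover)
    show "nn l \<le> nn (Suc l)" if "enat (Suc l) < enat (length ts)" for l
      using mono that by (simp add: nn_def diff_le_mono)
  qed (use step in auto)
  show ?thesis unfolding expansion_def using prism_sset cx_subcx[OF dc] ex by blast
qed



definition col :: "nat \<Rightarrow> (nat \<times> nat) set \<Rightarrow> nat set" where
  "col c C = {b. (c,b) \<in> C}"

locale hp =
  fixes m n i :: nat
  assumes m1: "1 \<le> m" and im: "i \<le> m"

definition covr :: "nat \<Rightarrow> nat \<Rightarrow> nat \<Rightarrow> (nat \<times> nat) set \<Rightarrow> bool" where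
  "covr m n i C \<longleftrightarrow> (\<forall>j\<le>m. j \<noteq> i \<longrightarrow> j \<in> fst ` C) \<and> (\<forall>j\<le>n. j \<in> snd ` C)"

definition MM :: "nat \<Rightarrow> nat \<Rightarrow> nat \<Rightarrow> (nat \<times> nat) set \<Rightarrow> bool" where
  "MM m n i C \<longleftrightarrow> chain2 m n C \<and> covr m n i C"

definition cc :: "nat \<Rightarrow> nat" where "cc i = (if 0 < i then i - 1 else 1)"

definition wfx :: "nat \<Rightarrow> (nat \<times> nat) set \<Rightarrow> nat \<times> nat" where
  "wfx i C = (if 0 < i then (i, Max (col (cc i) C)) else (0, Min (col (cc i) C)))"

lemma snd_wf: "snd (wfx i C) = (if 0 < i then Max (col (cc i) C) else Min (col (cc i) C))"
  by (simp add: wfx_def)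

lemma fst_wf: "fst (wfx i C) = i"
  by (simp add: wfx_def)

context hp begin

lemma cc_le: "cc i \<le> m" "cc i \<noteq> i"
  using m1 im by (auto simp: cc_def)


lemma col_fin: "finite C \<Longrightarrow> finite (col c C)"
proof -
  assume "finite C"
  moreover have "col c C \<subseteq> snd ` C" by (force simp: col_def)
  ultimately show ?thesis using finite_subset by blast
qed

lemma col_ne: "MM m n i C \<Longrightarrow> col (cc i) C \<noteq> {}"
proof -
  assume "MM m n i C"
  then have "cc i \<in> fst ` C" using cc_le by (auto simp: MM_def covr_def)
  then show ?thesis by (force simp: col_def)
qed

lemma wf_in_col:
  assumes "MM m n i C"
  shows "snd (wfx i C) \<in> col (cc i) C" "(cc i, snd (wfx i C)) \<in> C"
proof -
  have f: "finite (col (cc i) C)" using assms col_fin by (simp add: MM_def chain2_def)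
  have ne: "col (cc i) C \<noteq> {}" using col_ne[OF assms] .
  show "snd (wfx i C) \<in> col (cc i) C" using Max_in[OF f ne] Min_in[OF f ne] by (simp only: snd_wf split: if_split) blast
  then show "(cc i, snd (wfx i C)) \<in> C" by (simp add: col_def)
qed

lemma wf_grid:
  assumes "MM m n i C"
  shows "wfx i C \<in> {0..m} \<times> {0..n}"
proof -
  have "(cc i, snd (wfx i C)) \<in> C" using wf_in_col[OF assms] by simp
  moreover have "C \<subseteq> {0..m} \<times> {0..n}" using assms by (simp add: MM_def chain2_def)
  ultimately have "(cc i, snd (wfx i C)) \<in> {0..m} \<times> {0..n}" by (rule subsetD[rotated])
  then have "snd (wfx i C) \<le> n" by simp
  moreover have "wfx i C = (i, snd (wfx i C))" by (metis fst_wf prod.collapse)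
  ultimately show ?thesis using im by (metis atLeastAtMost_iff le0 mem_Sigma_iff)
qed

lemma col_extr:
  assumes "MM m n i C" "(cc i, b) \<in> C"
  shows "0 < i \<Longrightarrow> b \<le> snd (wfx i C)" "i = 0 \<Longrightarrow> snd (wfx i C) \<le> b"
proof -
  have f: "finite (col (cc i) C)" using assms col_fin by (simp add: MM_def chain2_def)
  have "b \<in> col (cc i) C" using assms(2) by (simp add: col_def)
  then show "0 < i \<Longrightarrow> b \<le> snd (wfx i C)" "i = 0 \<Longrightarrow> snd (wfx i C) \<le> b"
    using f by (simp_all add: snd_wf)
qed

lemma chain_ins:
  assumes "MM m n i C"
  shows "chain2 m n (insert (wfx i C) C)"
proof -
  have ch: "finite C" "C \<subseteq> {0..m} \<times> {0..n}" "\<And>u v. u \<in> C \<Longrightarrow> v \<in> C \<Longrightarrow> le2 u v \<or> le2 v u"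
    using assms by (auto simp: MM_def chain2_def)
  define b where "b = snd (wfx i C)"
  have w: "wfx i C = (i, b)" using fst_wf[of i C] by (simp add: b_def prod_eq_iff)
  have p: "(cc i, b) \<in> C" using wf_in_col[OF assms] by (simp add: b_def)
  have comp: "le2 u (i,b) \<or> le2 (i,b) u" if u: "u \<in> C" for u
  proof (cases "0 < i")
    case True
    then have cci: "cc i = i - 1" by (simp add: cc_def)
    from ch(3)[OF u p] show ?thesis
    proof
      assume "le2 u (cc i, b)" then show ?thesis using cci by (auto simp: le2_def)
    next
      assume h: "le2 (cc i, b) u"
      show ?thesis
      proof (cases "fst u \<ge> i")
        case True then show ?thesis using h by (auto simp: le2_def)
      next
        case False
        then have "fst u = cc i" using h cci True by (auto simp: le2_def)
        then have "(cc i, snd u) \<in> C" using u by (metis prod.collapse)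
        then have "snd u \<le> b" using col_extr(1)[OF assms] True by (simp add: b_def)
        then show ?thesis using h cci True \<open>fst u = cc i\<close> by (auto simp: le2_def)
      qed
    qed
  next
    case False
    then have i0: "i = 0" "cc i = 1" by (auto simp: cc_def)
    from ch(3)[OF u p] show ?thesis
    proof
      assume h: "le2 u (cc i, b)"
      show ?thesis
      proof (cases "fst u = 0")
        case True then show ?thesis using h i0 by (auto simp: le2_def)
      next
        case False
        then have "fst u = cc i" using h i0 by (auto simp: le2_def)
        then have "(cc i, snd u) \<in> C" using u by (metis prod.collapse)
        then have "b \<le> snd u" using col_extr(2)[OF assms] i0 by (simp add: b_def)
        then show ?thesis using h i0 \<open>fst u = cc i\<close> by (auto simp: le2_def)
      qed
    next
      assume "le2 (cc i, b) u" then show ?thesis using i0 by (auto simp: le2_def)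
    qed
  qed
  have wg: "wfx i C \<in> {0..m} \<times> {0..n}" using wf_grid[OF assms] .
  have refl: "le2 u u" for u by (simp add: le2_def)
  show ?thesis unfolding chain2_def
  proof (intro conjI ballI)
    show "finite (insert (wfx i C) C)" using ch(1) by simp
    show "insert (wfx i C) C \<subseteq> {0..m} \<times> {0..n}" using ch(2) wg by simp
    fix u v assume u: "u \<in> insert (wfx i C) C" and v: "v \<in> insert (wfx i C) C"
    show "le2 u v \<or> le2 v u"
    proof (cases "u = wfx i C")
      case True
      then show ?thesis
      proof (cases "v = wfx i C")
        case True then show ?thesis using \<open>u = wfx i C\<close> refl by simp
      next
        case False then have "v \<in> C" using v by simp
        then show ?thesis using comp[of v] True w by auto
      qed
    next
      case False then have uC: "u \<in> C" using u by simp
      show ?thesis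
      proof (cases "v = wfx i C")
        case True then show ?thesis using comp[OF uC] w by auto
      next
        case False then have "v \<in> C" using v by simp
        then show ?thesis using ch(3) uC by blast
      qed
    qed
  qed
qed

end


definition Tset :: "nat \<Rightarrow> nat \<Rightarrow> nat \<Rightarrow> (nat \<times> nat) set set" where
  "Tset m n i = {C. MM m n i C \<and> wfx i C \<in> C}"

definition key :: "nat \<Rightarrow> nat \<Rightarrow> (nat \<times> nat) set \<Rightarrow> nat" where
  "key n i C = card C * Suc n + (if 0 < i then snd (wfx i C) else n - snd (wfx i C))"

lemma col_ins: "fst u \<noteq> c \<Longrightarrow> col c (insert u C) = col c C"
  by (cases u) (auto simp: col_def)

lemma col_del: "fst u \<noteq> c \<Longrightarrow> col c (C - {u}) = col c C"
  by (cases u) (auto simp: col_def)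

lemma wf_col: assumes "col (cc i) A = col (cc i) B" shows "wfx i A = wfx i B"
  unfolding wfx_def assms by (rule refl)

context hp begin

lemma fst_wf_cc: "fst (wfx i C) \<noteq> cc i"
  using cc_le(2) by (simp add: fst_wf)

lemma wf_ins: "wfx i (insert (wfx i C') C) = wfx i C"
  by (rule wf_col, rule col_ins, rule fst_wf_cc)

lemma wf_del: "wfx i (C - {wfx i C'}) = wfx i C"
  by (rule wf_col, rule col_del, rule fst_wf_cc)

lemma chain_sub: "chain2 m n B \<Longrightarrow> A \<subseteq> B \<Longrightarrow> chain2 m n A"
  unfolding chain2_def by (meson finite_subset subset_trans subsetD)

lemma covr_mono: "covr m n i A \<Longrightarrow> A \<subseteq> B \<Longrightarrow> covr m n i B"
  unfolding covr_def by (meson image_mono subsetD)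

lemma MM_ins: "MM m n i C \<Longrightarrow> MM m n i (insert (wfx i C) C)"
  using chain_ins covr_mono unfolding MM_def by (meson subset_insertI)

lemma MM_del:
  assumes "MM m n i C" "wfx i C \<in> C"
  shows "MM m n i (C - {wfx i C})"
proof -
  have ch: "chain2 m n (C - {wfx i C})" using assms chain_sub unfolding MM_def by blast
  have cv: "covr m n i C" using assms by (simp add: MM_def)
  have p: "(cc i, snd (wfx i C)) \<in> C" using wf_in_col[OF assms(1)] by simp
  have pw: "(cc i, snd (wfx i C)) \<noteq> wfx i C" using fst_wf_cc[of C] by (metis fst_conv)
  have "covr m n i (C - {wfx i C})"
    unfolding covr_def
  proof (intro conjI allI impI)
    fix j assume j: "j \<le> m" "j \<noteq> i"
    then obtain u where u: "u \<in> C" "fst u = j" using cv unfolding covr_def by force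
    then have "u \<noteq> wfx i C" using j fst_wf[of i C] by auto
    then show "j \<in> fst ` (C - {wfx i C})" using u by force
  next
    fix j assume "j \<le> n"
    then obtain u where u: "u \<in> C" "snd u = j" using cv unfolding covr_def by force
    show "j \<in> snd ` (C - {wfx i C})"
    proof (cases "u = wfx i C")
      case True
      then have "(cc i, snd (wfx i C)) \<in> C - {wfx i C}" "snd (cc i, snd (wfx i C)) = j" using p pw u by auto
      then show ?thesis by (metis image_eqI)
    next
      case False then show ?thesis using u by force
    qed
  qed
  then show ?thesis using ch by (simp add: MM_def)
qed

lemma snd_wf_le: "MM m n i C \<Longrightarrow> snd (wfx i C) \<le> n"
  using wf_grid by force

lemma wf_cmp:
  assumes "MM m n i A" "MM m n i B" "col (cc i) A \<subseteq> col (cc i) B"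
  shows "0 < i \<Longrightarrow> snd (wfx i A) \<le> snd (wfx i B)" "i = 0 \<Longrightarrow> snd (wfx i B) \<le> snd (wfx i A)"
proof -
  have fB: "finite (col (cc i) B)" using assms(2) col_fin by (simp add: MM_def chain2_def)
  have neA: "col (cc i) A \<noteq> {}" using col_ne[OF assms(1)] .
  show "0 < i \<Longrightarrow> snd (wfx i A) \<le> snd (wfx i B)"
    using Max_mono[OF assms(3) neA fB] by (simp add: snd_wf)
  show "i = 0 \<Longrightarrow> snd (wfx i B) \<le> snd (wfx i A)"
    using Min_antimono[OF assms(3) neA fB] by (simp add: snd_wf)
qed

lemma wf_eq_snd: "snd (wfx i A) = snd (wfx i B) \<Longrightarrow> wfx i A = wfx i B"
  by (simp add: prod_eq_iff fst_wf)

lemma key_card_lt: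
  assumes "MM m n i A" "MM m n i B" "card A < card B"
  shows "key n i A < key n i B"
proof -
  have "snd (wfx i A) \<le> n" using snd_wf_le[OF assms(1)] .
  then have "key n i A < Suc (card A) * Suc n" by (auto simp: key_def)
  also have "\<dots> \<le> card B * Suc n" using assms(3) by (intro mult_le_mono1) simp
  also have "\<dots> \<le> key n i B" by (simp add: key_def)
  finally show ?thesis .
qed

lemma key_same_card:
  assumes "MM m n i A" "MM m n i B" "card A = card B"
    "0 < i \<Longrightarrow> snd (wfx i A) < snd (wfx i B)" "i = 0 \<Longrightarrow> snd (wfx i B) < snd (wfx i A)"
  shows "key n i A < key n i B"
proof (cases "0 < i")
  case True then show ?thesis using assms by (simp add: key_def)
next
  case False
  then have "snd (wfx i B) < snd (wfx i A)" using assms(5) by simp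
  moreover have "snd (wfx i A) \<le> n" using snd_wf_le[OF assms(1)] .
  ultimately show ?thesis using False assms(3) by (simp add: key_def)
qed

lemma Tset_c1:
  assumes t: "\<tau> \<in> Tset m n i" and v: "v \<in> \<tau>" "v \<noteq> wfx i \<tau>" and cv: "covr m n i (\<tau> - {v})"
  shows "\<exists>\<tau>'\<in>Tset m n i. \<tau> - {v} \<subseteq> \<tau>' \<and> key n i \<tau>' < key n i \<tau>"
proof -
  have Mt: "MM m n i \<tau>" and wt: "wfx i \<tau> \<in> \<tau>" using t by (auto simp: Tset_def)
  have fin: "finite \<tau>" using Mt by (simp add: MM_def chain2_def)
  define \<sigma> where "\<sigma> = \<tau> - {v}"
  have Ms: "MM m n i \<sigma>" using Mt cv chain_sub unfolding MM_def \<sigma>_def by blast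
  show ?thesis
  proof (cases "wfx i \<sigma> \<in> \<sigma>")
    case True
    then have "\<sigma> \<in> Tset m n i" using Ms by (simp add: Tset_def)
    moreover have "card \<sigma> < card \<tau>" using fin v unfolding \<sigma>_def by (meson card_Diff1_less)
    then have "key n i \<sigma> < key n i \<tau>" using key_card_lt Ms Mt by blast
    ultimately show ?thesis unfolding \<sigma>_def by blast
  next
    case False
    define \<tau>' where "\<tau>' = insert (wfx i \<sigma>) \<sigma>"
    have M': "MM m n i \<tau>'" using MM_ins[OF Ms] by (simp add: \<tau>'_def)
    have w': "wfx i \<tau>' = wfx i \<sigma>" unfolding \<tau>'_def by (rule wf_ins)
    then have T': "\<tau>' \<in> Tset m n i" using M' by (simp add: Tset_def \<tau>'_def)
    have "card \<sigma> = card \<tau> - 1" using fin v unfolding \<sigma>_def by simp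
    moreover have "card \<tau>' = Suc (card \<sigma>)" using False fin unfolding \<tau>'_def \<sigma>_def by simp
    moreover have "card \<tau> \<ge> 1" using fin v by (metis One_nat_def Suc_leI card_gt_0_iff empty_iff)
    ultimately have cd: "card \<tau>' = card \<tau>" by simp
    have colsub: "col (cc i) \<sigma> \<subseteq> col (cc i) \<tau>" unfolding \<sigma>_def col_def by blast
    have ne: "wfx i \<sigma> \<noteq> wfx i \<tau>" using False wt v unfolding \<sigma>_def by auto
    then have nes: "snd (wfx i \<sigma>) \<noteq> snd (wfx i \<tau>)" using wf_eq_snd by blast
    have "key n i \<tau>' < key n i \<tau>"
    proof (rule key_same_card[OF M' Mt cd])
      assume "0 < i" then show "snd (wfx i \<tau>') < snd (wfx i \<tau>)"
        using wf_cmp(1)[OF Ms Mt colsub] nes w' by simp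
    next
      assume "i = 0" then show "snd (wfx i \<tau>) < snd (wfx i \<tau>')"
        using wf_cmp(2)[OF Ms Mt colsub] nes w' by simp
    qed
    moreover have "\<tau> - {v} \<subseteq> \<tau>'" unfolding \<tau>'_def \<sigma>_def by blast
    ultimately show ?thesis using T' by blast
  qed
qed

lemma Tset_c2:
  assumes t: "\<tau> \<in> Tset m n i" and t2: "\<tau>'' \<in> Tset m n i" and sub: "\<tau> - {wfx i \<tau>} \<subseteq> \<tau>''"
    and ne: "\<tau>'' \<noteq> \<tau>"
  shows "key n i \<tau> < key n i \<tau>''"
proof -
  have Mt: "MM m n i \<tau>" and wt: "wfx i \<tau> \<in> \<tau>" using t by (auto simp: Tset_def)
  have M2: "MM m n i \<tau>''" and w2: "wfx i \<tau>'' \<in> \<tau>''" using t2 by (auto simp: Tset_def)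
  have fin: "finite \<tau>" using Mt by (simp add: MM_def chain2_def)
  have fin2: "finite \<tau>''" using M2 by (simp add: MM_def chain2_def)
  define \<sigma> where "\<sigma> = \<tau> - {wfx i \<tau>}"
  have ws: "wfx i \<sigma> = wfx i \<tau>" unfolding \<sigma>_def by (rule wf_del)
  have "\<tau>'' \<noteq> \<sigma>" using w2 ws unfolding \<sigma>_def by auto
  then have ps: "\<sigma> \<subset> \<tau>''" using sub unfolding \<sigma>_def by blast
  then have "card \<sigma> < card \<tau>''" using fin2 by (simp add: psubset_card_mono)
  moreover have "card \<sigma> = card \<tau> - 1" using fin wt unfolding \<sigma>_def by simp
  moreover have "card \<tau> \<ge> 1" using fin wt by (metis One_nat_def Suc_leI card_gt_0_iff empty_iff)
  ultimately have "card \<tau> \<le> card \<tau>''" by simp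
  then consider "card \<tau> < card \<tau>''" | "card \<tau> = card \<tau>''" by linarith
  then show ?thesis
  proof cases
    case 1 then show ?thesis using key_card_lt Mt M2 by blast
  next
    case 2
    have nin: "wfx i \<tau> \<notin> \<tau>''"
    proof
      assume "wfx i \<tau> \<in> \<tau>''"
      then have "\<tau> \<subseteq> \<tau>''" using sub by blast
      then have "\<tau> = \<tau>''" using 2 fin2 card_subset_eq by blast
      then show False using ne by simp
    qed
    have colsub: "col (cc i) \<tau> \<subseteq> col (cc i) \<tau>''"
    proof -
      have "col (cc i) \<tau> = col (cc i) \<sigma>" unfolding \<sigma>_def by (rule col_del[symmetric], rule fst_wf_cc)
      also have "\<dots> \<subseteq> col (cc i) \<tau>''" using sub unfolding \<sigma>_def col_def by blast
      finally show ?thesis .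
    qed
    have "wfx i \<tau>'' \<noteq> wfx i \<tau>" using nin w2 by auto
    then have nes: "snd (wfx i \<tau>) \<noteq> snd (wfx i \<tau>'')" using wf_eq_snd by metis
    show ?thesis
    proof (rule key_same_card[OF Mt M2 2])
      assume "0 < i" then show "snd (wfx i \<tau>) < snd (wfx i \<tau>'')"
        using wf_cmp(1)[OF Mt M2 colsub] nes by simp
    next
      assume "i = 0" then show "snd (wfx i \<tau>'') < snd (wfx i \<tau>)"
        using wf_cmp(2)[OF Mt M2 colsub] nes by simp
    qed
  qed
qed

lemma Tset_dim:
  assumes "\<tau> \<in> Tset m n i"
  shows "Suc m \<le> card \<tau>"
proof -
  have Mt: "MM m n i \<tau>" and wt: "wfx i \<tau> \<in> \<tau>" using assms by (auto simp: Tset_def)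
  have fin: "finite \<tau>" using Mt by (simp add: MM_def chain2_def)
  have "{0..m} \<subseteq> fst ` \<tau>"
  proof
    fix j assume j: "j \<in> {0..m}"
    show "j \<in> fst ` \<tau>"
    proof (cases "j = i")
      case True then show ?thesis using wt fst_wf[of i \<tau>] by force
    next
      case False then show ?thesis using Mt j by (auto simp: MM_def covr_def)
    qed
  qed
  then have "card {0..m} \<le> card (fst ` \<tau>)" using card_mono[OF finite_imageI[OF fin]] by blast
  also have "\<dots> \<le> card \<tau>" using fin by (rule card_image_le)
  finally show ?thesis by simp
qed

lemma Tset_fin: "finite (Tset m n i)"
proof -
  have "Tset m n i \<subseteq> Pow ({0..m} \<times> {0..n})" by (auto simp: Tset_def MM_def chain2_def)
  then show ?thesis by (rule finite_subset) simp
qed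

end


definition lvl :: "nat \<Rightarrow> nat \<Rightarrow> nat \<Rightarrow> (nat \<times> nat) set set \<Rightarrow> (nat \<times> nat) set list \<Rightarrow> (nat \<times> nat) list \<Rightarrow> bool" where
  "lvl m n d K0 ts ws \<longleftrightarrow> downcl K0 \<and> length ws = length ts \<and>
    (\<forall>l<length ts. chain2 m n (ts!l) \<and> ws!l \<in> ts!l \<and> Suc d \<le> card (ts!l) \<and>
        (\<forall>v. v \<in> ts!l \<longrightarrow> v \<noteq> ws!l \<longrightarrow> ts!l - {v} \<in> Kl K0 ts l) \<and>
        ts!l - {ws!l} \<notin> Kl K0 ts l) \<and>
    (\<forall>l. Suc l < length ts \<longrightarrow> card (ts!l) \<le> card (ts!Suc l)) \<and>
    (\<forall>C. chain2 m n C \<longrightarrow> C \<in> Kl K0 ts (length ts))"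

lemma lvl_exp: "lvl m n d K0 ts ws \<Longrightarrow> expansion d (cx m n K0) (prism m n) act_prod"
  unfolding lvl_def by (rule levelA[where ts = ts and ws = ws]) blast+

definition sws :: "(nat \<times> nat) set \<Rightarrow> (nat \<times> nat) set" where
  "sws C = prod.swap ` C"

lemma sws_sws[simp]: "sws (sws C) = C"
  by (simp add: sws_def image_image)

lemma sws_sub: "sws A \<subseteq> sws B \<longleftrightarrow> A \<subseteq> B"
  by (auto simp: sws_def)

lemma sws_diff: "sws A - {v} = sws (A - {prod.swap v})"
  by (auto simp: sws_def)

lemma sws_mem: "v \<in> sws A \<longleftrightarrow> prod.swap v \<in> A"
  unfolding sws_def by (metis image_iff swap_swap)

lemma sws_card: "card (sws A) = card A"
  unfolding sws_def by (rule card_image) (simp add: inj_on_def, metis swap_swap)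

lemma sws_img_mem: "sws C \<in> sws ` K \<longleftrightarrow> C \<in> K"
  by (metis image_eqI imageE sws_sws)

lemma img_mem_sws: "U \<in> sws ` K \<longleftrightarrow> sws U \<in> K"
  by (metis sws_img_mem sws_sws)

lemma chain_sws: "chain2 n m C \<Longrightarrow> chain2 m n (sws C)"
  unfolding chain2_def sws_def le2_def by auto

lemma Kl_sws: assumes "l \<le> length ts" shows "Kl (sws ` K0) (map sws ts) l = sws ` Kl K0 ts l"
proof (rule set_eqI)
  fix U
  have "U \<in> sws ` K0 \<longleftrightarrow> sws U \<in> K0" by (rule img_mem_sws)
  moreover have "(\<exists>j<l. U \<subseteq> map sws ts ! j) \<longleftrightarrow> (\<exists>j<l. sws U \<subseteq> ts ! j)"
  proof -
    have "U \<subseteq> map sws ts ! j \<longleftrightarrow> sws U \<subseteq> ts ! j" if "j < l" for j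
    proof -
      have "map sws ts ! j = sws (ts!j)" using that assms by simp
      then show ?thesis using sws_sub[of U "sws (ts!j)"] by simp
    qed
    then show ?thesis by blast
  qed
  ultimately have "U \<in> Kl (sws ` K0) (map sws ts) l \<longleftrightarrow> sws U \<in> Kl K0 ts l"
    by (simp add: Kl_def)
  also have "\<dots> \<longleftrightarrow> U \<in> sws ` Kl K0 ts l" by (rule img_mem_sws[symmetric])
  finally show "U \<in> Kl (sws ` K0) (map sws ts) l \<longleftrightarrow> U \<in> sws ` Kl K0 ts l" .
qed

lemma lvl_sws:
  assumes "lvl n m d K0 ts ws"
  shows "lvl m n d (sws ` K0) (map sws ts) (map prod.swap ws)"
proof -
  have dc: "downcl K0" and lw: "length ws = length ts"
    and pl: "\<And>l. l < length ts \<Longrightarrow> chain2 n m (ts!l) \<and> ws!l \<in> ts!l \<and> Suc d \<le> card (ts!l) \<and>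
        (\<forall>v. v \<in> ts!l \<longrightarrow> v \<noteq> ws!l \<longrightarrow> ts!l - {v} \<in> Kl K0 ts l) \<and>
        ts!l - {ws!l} \<notin> Kl K0 ts l"
    and mo: "\<And>l. Suc l < length ts \<Longrightarrow> card (ts!l) \<le> card (ts!Suc l)"
    and cv: "\<And>C. chain2 n m C \<Longrightarrow> C \<in> Kl K0 ts (length ts)"
    using assms unfolding lvl_def by blast+
  show ?thesis unfolding lvl_def
  proof (intro conjI allI impI)
    show "downcl (sws ` K0)"
      unfolding downcl_def
    proof (intro allI impI)
      fix A B assume "A \<in> sws ` K0" "B \<subseteq> A"
      then obtain A' where "A' \<in> K0" "A = sws A'" by blast
      then have "sws B \<subseteq> A'" using \<open>B \<subseteq> A\<close> sws_sub[of B "sws A'"] by simp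
      then have "sws B \<in> K0" using dc \<open>A' \<in> K0\<close> unfolding downcl_def by blast
      then show "B \<in> sws ` K0" by (simp add: img_mem_sws)
    qed
    show "length (map prod.swap ws) = length (map sws ts)" using lw by simp
  next
    fix l assume l: "l < length (map sws ts)"
    then have l': "l < length ts" by simp
    have t: "map sws ts ! l = sws (ts!l)" using l' by simp
    have w: "map prod.swap ws ! l = prod.swap (ws!l)" using l' lw by simp
    have K: "Kl (sws ` K0) (map sws ts) l = sws ` Kl K0 ts l" using l' by (intro Kl_sws) simp
    note p = pl[OF l']
    show "chain2 m n (map sws ts ! l)" using p chain_sws t by simp
    show "Suc d \<le> card (map sws ts ! l)" using p t sws_card by simp
    show "map prod.swap ws ! l \<in> map sws ts ! l" using p t w sws_mem by simp
    show "map sws ts ! l - {map prod.swap ws ! l} \<notin> Kl (sws ` K0) (map sws ts) l"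
      unfolding t w K sws_diff img_mem_sws sws_sws using p by simp
    fix v assume v: "v \<in> map sws ts ! l" "v \<noteq> map prod.swap ws ! l"
    then have "prod.swap v \<in> ts!l" "prod.swap v \<noteq> ws!l" using t w sws_mem by (auto, metis swap_swap)
    then have "ts!l - {prod.swap v} \<in> Kl K0 ts l" using p by blast
    then show "map sws ts ! l - {v} \<in> Kl (sws ` K0) (map sws ts) l"
      unfolding t K sws_diff img_mem_sws sws_sws .
  next
    fix l assume "Suc l < length (map sws ts)"
    then show "card (map sws ts ! l) \<le> card (map sws ts ! Suc l)" using mo sws_card by simp
  next
    fix C assume "chain2 m n C"
    then have "chain2 n m (sws C)" using chain_sws by fastforce
    then have "sws C \<in> Kl K0 ts (length ts)" by (rule cv)
    then show "C \<in> Kl (sws ` K0) (map sws ts) (length (map sws ts))"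
      using Kl_sws[of "length ts" ts K0] img_mem_sws by simp
  qed
qed



lemma fst_zs: "length a = length b \<Longrightarrow> fst ` zs (a,b) = set a"
  by (simp add: zs_def) (metis map_fst_zip set_map)

lemma snd_zs: "length a = length b \<Longrightarrow> snd ` zs (a,b) = set b"
  by (simp add: zs_def) (metis map_snd_zip set_map)

context hp begin

definition K0 :: "(nat \<times> nat) set set" where "K0 = {C. \<not> covr m n i C}"

lemma hp1: "horn_prism1 m n i = cx m n K0"
proof
  fix k
  show "horn_prism1 m n i k = cx m n K0 k"
  proof (rule set_eqI)
    fix ab :: "nat list \<times> nat list"
    obtain a b where ab: "ab = (a,b)" by (cases ab)
    show "ab \<in> horn_prism1 m n i k \<longleftrightarrow> ab \<in> cx m n K0 k"
    proof (cases "ab \<in> prism m n k")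
      case False
      then show ?thesis by (auto simp: horn_prism1_def cx_def prism_def horn_def bdry_def ab)
    next
      case True
      then have a: "a \<in> simplex m k" and b: "b \<in> simplex n k" by (auto simp: prism_def ab)
      then have l: "length a = length b" by (simp add: simplex_len)
      have "ab \<in> horn_prism1 m n i k \<longleftrightarrow> (\<exists>j\<le>m. j \<noteq> i \<and> j \<notin> set a) \<or> (\<exists>j\<le>n. j \<notin> set b)"
        using a b by (auto simp: horn_prism1_def horn_def bdry_def ab)
      also have "\<dots> \<longleftrightarrow> \<not> covr m n i (zs ab)"
        unfolding covr_def ab fst_zs[OF l] snd_zs[OF l] by blast
      also have "\<dots> \<longleftrightarrow> ab \<in> cx m n K0 k" using True by (simp add: cx_def K0_def)
      finally show ?thesis .
    qed
  qed
qed

lemma lvl1: "\<exists>ts ws. lvl m n m K0 ts ws"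
proof -
  obtain xs where xs: "distinct xs" "set xs = Tset m n i" using finite_distinct_list[OF Tset_fin] by blast
  define ts where "ts = sort_key (key n i) xs"
  have ts: "distinct ts" "set ts = Tset m n i" "sorted (map (key n i) ts)"
    using xs by (auto simp: ts_def)
  define ws where "ws = map (wfx i) ts"
  have tin: "ts!l \<in> Tset m n i" if "l < length ts" for l using ts(2) that nth_mem by blast
  have srt: "j < l" if "j < length ts" "l < length ts" "key n i (ts!j) < key n i (ts!l)" for j l
  proof (rule ccontr)
    assume "\<not> j < l"
    then have "key n i (ts!l) \<le> key n i (ts!j)"
      using sorted_nth_mono[OF ts(3), of l j] that by simp
    then show False using that(3) by simp
  qed
  have srt2: "key n i (ts!j) \<le> key n i (ts!l)" if "j \<le> l" "l < length ts" for j l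
    using sorted_nth_mono[OF ts(3), of j l] that by simp
  have idxT: "\<exists>j<length ts. ts!j = \<tau>" if "\<tau> \<in> Tset m n i" for \<tau>
    using that ts(2) by (metis in_set_conv_nth)
  have "lvl m n m K0 ts ws" unfolding lvl_def
  proof (intro conjI allI impI)
    show "downcl K0" unfolding downcl_def K0_def using covr_mono by blast
    show "length ws = length ts" by (simp add: ws_def)
    show "chain2 m n (ts!l)" if "l < length ts" for l using tin[OF that] by (simp add: Tset_def MM_def)
    show "ws!l \<in> ts!l" if "l < length ts" for l using tin[OF that] that by (simp add: Tset_def ws_def)
    show "Suc m \<le> card (ts!l)" if "l < length ts" for l using Tset_dim[OF tin[OF that]] .
  next
    fix l v assume l: "l < length ts" and v1: "v \<in> ts!l" and v2: "v \<noteq> ws!l"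
    note v = v1 v2
    show "ts!l - {v} \<in> Kl K0 ts l"
    proof (cases "covr m n i (ts!l - {v})")
      case False then show ?thesis by (simp add: Kl_def K0_def)
    next
      case True
      obtain \<tau>' where t': "\<tau>' \<in> Tset m n i" "ts!l - {v} \<subseteq> \<tau>'" "key n i \<tau>' < key n i (ts!l)"
        using Tset_c1[OF tin[OF l] v(1) _ True] v(2) l by (auto simp: ws_def)
      obtain j where j: "j < length ts" "ts!j = \<tau>'" using idxT[OF t'(1)] by blast
      have "j < l" using srt[OF j(1) l] t'(3) j(2) by simp
      then show ?thesis using t'(2) j(2) by (auto simp: Kl_def)
    qed
  next
    fix l assume l: "l < length ts"
    have T: "ts!l \<in> Tset m n i" using tin[OF l] .
    show "ts!l - {ws!l} \<notin> Kl K0 ts l"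
    proof
      assume "ts!l - {ws!l} \<in> Kl K0 ts l"
      then consider "ts!l - {ws!l} \<in> K0" | j where "j < l" "ts!l - {ws!l} \<subseteq> ts!j"
        unfolding Kl_def by blast
      then show False
      proof cases
        case 1
        have "MM m n i (ts!l - {wfx i (ts!l)})" using MM_del T by (simp add: Tset_def)
        then show False using 1 l by (simp add: K0_def MM_def ws_def)
      next
        case (2 j)
        have jl: "j < length ts" using 2 l by simp
        have "ts!j \<noteq> ts!l" using 2(1) l ts(1) nth_eq_iff_index_eq jl by fastforce
        then have "key n i (ts!l) < key n i (ts!j)"
          using Tset_c2[OF T tin[OF jl]] 2(2) l by (simp add: ws_def)
        moreover have "key n i (ts!j) \<le> key n i (ts!l)" using srt2 2(1) l by simp
        ultimately show False by simp
      qed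
    qed
  next
    fix l assume l: "Suc l < length ts"
    show "card (ts!l) \<le> card (ts!Suc l)"
    proof (rule ccontr)
      assume "\<not> card (ts!l) \<le> card (ts!Suc l)"
      then have "key n i (ts!Suc l) < key n i (ts!l)"
        using key_card_lt tin l by (simp add: Tset_def)
      moreover have "key n i (ts!l) \<le> key n i (ts!Suc l)" using srt2 l by simp
      ultimately show False by simp
    qed
  next
    fix C assume C: "chain2 m n C"
    show "C \<in> Kl K0 ts (length ts)"
    proof (cases "covr m n i C")
      case False then show ?thesis by (simp add: Kl_def K0_def)
    next
      case True
      then have M: "MM m n i C" using C by (simp add: MM_def)
      have "insert (wfx i C) C \<in> Tset m n i"
        using MM_ins[OF M] wf_ins[of C C] by (simp add: Tset_def)
      then obtain j where "j < length ts" "ts!j = insert (wfx i C) C" using idxT by blast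
      then show ?thesis by (auto simp: Kl_def)
    qed
  qed
  then show ?thesis by blast
qed

lemma exp1: "expansion m (horn_prism1 m n i) (prism m n) act_prod"
  using lvl1 lvl_exp unfolding hp1 by blast

end


lemma fst_sws: "fst ` sws Z = snd ` Z" by (force simp: sws_def)
lemma snd_sws: "snd ` sws Z = fst ` Z" by (force simp: sws_def)

lemma hp2: "horn_prism2 m n j = cx m n (sws ` {C. \<not> covr n m j C})"
proof
  fix k
  show "horn_prism2 m n j k = cx m n (sws ` {C. \<not> covr n m j C}) k"
  proof (rule set_eqI)
    fix ab :: "nat list \<times> nat list"
    obtain a b where ab: "ab = (a,b)" by (cases ab)
    show "ab \<in> horn_prism2 m n j k \<longleftrightarrow> ab \<in> cx m n (sws ` {C. \<not> covr n m j C}) k"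
    proof (cases "ab \<in> prism m n k")
      case False
      then show ?thesis by (auto simp: horn_prism2_def cx_def prism_def horn_def bdry_def ab)
    next
      case True
      then have a: "a \<in> simplex m k" and b: "b \<in> simplex n k" by (auto simp: prism_def ab)
      then have l: "length a = length b" by (simp add: simplex_len)
      have "ab \<in> horn_prism2 m n j k \<longleftrightarrow> (\<exists>x\<le>m. x \<notin> set a) \<or> (\<exists>y\<le>n. y \<noteq> j \<and> y \<notin> set b)"
        using a b by (auto simp: horn_prism2_def horn_def bdry_def ab)
      also have "\<dots> \<longleftrightarrow> \<not> covr n m j (sws (zs ab))"
        unfolding covr_def ab fst_sws snd_sws fst_zs[OF l] snd_zs[OF l] by blast
      also have "\<dots> \<longleftrightarrow> ab \<in> cx m n (sws ` {C. \<not> covr n m j C}) k"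
        using True by (simp add: cx_def img_mem_sws)
      finally show ?thesis .
    qed
  qed
qed

theorem lemma4p1:
  shows "(\<forall>m n i. 1 \<le> m \<and> i \<le> m \<longrightarrow>
            expansion m (horn_prism1 m n i) (prism m n) act_prod) \<and>
         (\<forall>m n j. 1 \<le> n \<and> j \<le> n \<longrightarrow>
            expansion n (horn_prism2 m n j) (prism m n) act_prod)"
proof (intro conjI allI impI)
  fix m n i :: nat assume "1 \<le> m \<and> i \<le> m"
  then interpret hp m n i by unfold_locales auto
  show "expansion m (horn_prism1 m n i) (prism m n) act_prod" by (rule exp1)
next
  fix m n j :: nat assume "1 \<le> n \<and> j \<le> n"
  then interpret h: hp n m j by unfold_locales auto
  obtain ts ws where "lvl n m n h.K0 ts ws" using h.lvl1 by blast
  then have "lvl m n n (sws ` h.K0) (map sws ts) (map prod.swap ws)" by (rule lvl_sws)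
  then have "expansion n (cx m n (sws ` h.K0)) (prism m n) act_prod" by (rule lvl_exp)
  moreover have "h.K0 = {C. \<not> covr n m j C}" by (simp add: h.K0_def)
  ultimately show "expansion n (horn_prism2 m n j) (prism m n) act_prod" by (simp add: hp2)
qed


end
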